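(* Fix integers $r\ge 2$ and $m\ge 1$, put $N=2^m$, fix a noise variance $\sigma^2>0$ and a threshold $P_e\in(0,1)$ (in the paper $P_e=2^{-N^{\beta}}$ for some $\beta<1/2$). For $1\le \ell\le r-1$ let $W_\ell$ be the $2^{\ell-1}\mathbb{Z}/2^{\ell}\mathbb{Z}$ channel with noise variance $\sigma^2$, and let $\mathcal{A}_\ell=\{i\in\{1,\dots,N\}: Z(W_{\ell,N}^{(i)})<P_e\}$ be the free set of the polar code $P(N,k_\ell)$ constructed for $W_\ell$, where $k_\ell=|\mathcal{A}_\ell|$. Then the polar codes constructed at the levels of the multilevel construction are nested: $$P(N,k_1)\subseteq P(N,k_2)\subseteq\cdots\subseteq P(N,k_{r-1}).$$
   Context: Mod-2 BAWGN channel with noise variance $s^2$: the input bit $x\in\{0,1\}$ is sent as the real number $x$, real Gaussian noise $z\sim\mathcal{N}(0,s^2)$ is added, and the receiver observes $(x+z)\bmod 2\mathbb{Z}$, reduced into $[-1,1]$. This is a binary-input memoryless output-symmetric channel. The $2^{\ell-1}\mathbb{Z}/2^{\ell}\mathbb{Z}$ channel with noise variance $\sigma^2$ has input bit $x$, transmits $2^{\ell-1}x$, adds noise $\mathcal{N}(0,\sigma^2)$, and outputs the result reduced modulo $2^{\ell}\mathbb{Z}$. Dividing the output by $2^{\ell-1}$ shows it is equivalent to the mod-2 BAWGN channel with noise variance $\sigma^2/4^{\ell-1}$. Polar codes: for a binary-input memoryless symmetric channel $W$ and $N=2^m$, let $G=\begin{bmatrix}1&0\\1&1\end{bmatrix}^{\otimes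 m}$. The synthesized bit channels are $$W_N^{(i)}(y_1^N,u_1^{i-1}\mid u_i)=\sum_{u_{i+1}^N\in\{0,1\}^{N-i}}\frac{1}{2^{N-1}}W^N(y_1^N\mid u_1^N G).$$ For a binary-input channel $V$ with output $y$, the Bhattacharyya parameter is $Z(V)=\sum_y\sqrt{V(y\mid 0)V(y\mid 1)}$, with an integral in place of the sum for continuous outputs. For a free set $\mathcal{A}\subseteq\{1,\dots,N\}$ the polar code is $\{u_{\mathcal{A}}G_{\mathcal{A}}: u_{\mathcal{A}}\in\{0,1\}^{|\mathcal{A}|}\}$, where $G_{\mathcal{A}}$ consists of the rows of $G$ indexed by $\mathcal{A}$ and the frozen bits are set to $0$. $P(N,k)$ denotes such a polar code with $k=|\mathcal{A}|$ information bits. *)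

theory Defs
  imports "HOL-Probability.Probability"
begin

text \<open>Bits are represented as bool (False = 0, True = 1); XOR is parity.
  Indices of vectors run over {1..N}, N = 2^m, as in the paper.\<close>

text \<open>The 2^(l-1)Z/2^l Z channel with noise variance s2: input bit b is sent as
  2^(l-1) b, Gaussian noise N(0,s2) is added and the output is reduced modulo
  2^l Z into [-2^(l-1), 2^(l-1)].\<close>
definition lattice_chan :: "real \<Rightarrow> nat \<Rightarrow> bool \<Rightarrow> real \<Rightarrow> real" where
  "lattice_chan s2 l b y =
     (\<Sum>\<^sub>\<infinity> k::int. normal_density (2 ^ (l - 1) * of_bool b) (sqrt s2) (y + 2 ^ l * of_int k))"

definition lattice_out :: "nat \<Rightarrow> real set" where
  "lattice_out l = {- (2 ^ (l - 1)) .. 2 ^ (l - 1)}"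

text \<open>Kronecker power of F = [[1,0],[1,1]] with 0-based indices:
  F^{(m+1)} = F \<otimes> F^{(m)}.\<close>
fun kron_F :: "nat \<Rightarrow> nat \<Rightarrow> nat \<Rightarrow> bool" where
  "kron_F 0 i j = True"
| "kron_F (Suc m) i j =
     ((j div 2 ^ m \<le> i div 2 ^ m) \<and> kron_F m (i mod 2 ^ m) (j mod 2 ^ m))"

definition polar_G :: "nat \<Rightarrow> nat \<Rightarrow> nat \<Rightarrow> bool" where
  "polar_G m i j = kron_F m (i - 1) (j - 1)"

definition polar_encode :: "nat \<Rightarrow> (nat \<Rightarrow> bool) \<Rightarrow> nat \<Rightarrow> bool" where
  "polar_encode m u j = odd (card {i \<in> {1..2 ^ m}. u i \<and> polar_G m i j})"

definition join_input :: "nat \<Rightarrow> (nat \<Rightarrow> bool) \<Rightarrow> bool \<Rightarrow> (nat \<Rightarrow> bool) \<Rightarrow> nat \<Rightarrow> bool" where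
  "join_input i u b v k = (if k < i then u k else if k = i then b else v k)"

definition bit_channel ::
  "(bool \<Rightarrow> real \<Rightarrow> real) \<Rightarrow> nat \<Rightarrow> nat \<Rightarrow> (nat \<Rightarrow> real) \<Rightarrow> (nat \<Rightarrow> bool) \<Rightarrow> bool \<Rightarrow> real" where
  "bit_channel W m i y u b =
     (\<Sum>v \<in> PiE {i+1..2 ^ m} (\<lambda>_. UNIV).
        (1 / 2 ^ (2 ^ m - 1)) *
        (\<Prod>j \<in> {1..2 ^ m}. W (polar_encode m (join_input i u b v) j) (y j)))"

definition bhatt_bit ::
  "(bool \<Rightarrow> real \<Rightarrow> real) \<Rightarrow> real set \<Rightarrow> nat \<Rightarrow> nat \<Rightarrow> ennreal" where
  "bhatt_bit W Y m i =
     (\<Sum>u \<in> PiE {1..i-1} (\<lambda>_. UNIV).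
        \<integral>\<^sup>+ y. indicator (PiE {1..2 ^ m} (\<lambda>_. Y)) y *
              ennreal (sqrt (bit_channel W m i y u False * bit_channel W m i y u True))
          \<partial>(PiM {1..2 ^ m} (\<lambda>_. lborel)))"

definition free_set ::
  "(bool \<Rightarrow> real \<Rightarrow> real) \<Rightarrow> real set \<Rightarrow> nat \<Rightarrow> real \<Rightarrow> nat set" where
  "free_set W Y m Pe = {i \<in> {1..2 ^ m}. bhatt_bit W Y m i < ennreal Pe}"

definition polar_code :: "nat \<Rightarrow> nat set \<Rightarrow> (nat \<Rightarrow> bool) set" where
  "polar_code m A =
     (\<lambda>u. restrict (polar_encode m u) {1..2 ^ m}) `
       PiE {1..2 ^ m} (\<lambda>i. if i \<in> A then UNIV else {False})"

end

theory Submission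
  imports Defs
begin


lemma count_int_suminf:
  fixes g :: "int \<Rightarrow> ennreal"
  shows "(\<integral>\<^sup>+k. g k \<partial>count_space UNIV) = (\<Sum>n. g (from_nat_into (UNIV::int set) n))"
  by (simp add: nn_integral_bij_count_space[symmetric, OF bij_betw_from_nat_into[OF countableI_type infinite_UNIV_int]]
       nn_integral_count_space_nat)

lemma measurable_count_int[measurable]:
  fixes g :: "int \<Rightarrow> 'a \<Rightarrow> ennreal"
  assumes [measurable]: "\<And>k. g k \<in> borel_measurable M"
  shows "(\<lambda>y. \<integral>\<^sup>+k. g k y \<partial>count_space UNIV) \<in> borel_measurable M"
  unfolding count_int_suminf by measurable

lemma ennreal_infsum_count:
  fixes f :: "int \<Rightarrow> real"
  assumes "f summable_on UNIV" "\<And>k. f k \<ge> 0"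
  shows "ennreal (infsum f UNIV) = (\<integral>\<^sup>+k. ennreal (f k) \<partial>count_space UNIV)"
proof -
  have L: "ennreal (infsum f UNIV) = (SUP F\<in>{F. finite F \<and> F \<subseteq> UNIV}. ennreal (sum f F))"
    by (rule infsum_nonneg_is_SUPREMUM_ennreal) (use assms in auto)
  have ge: "ennreal (sum f F) \<le> (\<integral>\<^sup>+k. ennreal (f k) \<partial>count_space UNIV)" if "finite F" for F
  proof -
    have "ennreal (sum f F) = (\<Sum>k\<in>F. ennreal (f k))" using assms(2) by (simp add: sum_ennreal)
    also have "\<dots> = (\<integral>\<^sup>+k. ennreal (f k) * indicator F k \<partial>count_space UNIV)"
      by (subst nn_integral_indicator_finite) (auto simp: that)
    also have "\<dots> \<le> (\<integral>\<^sup>+k. ennreal (f k) \<partial>count_space UNIV)"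
      by (intro nn_integral_mono) (auto simp: indicator_def)
    finally show ?thesis .
  qed
  let ?h = "from_nat_into (UNIV::int set)"
  have inj: "inj ?h"
    using bij_betw_from_nat_into[OF countableI_type infinite_UNIV_int] by (simp add: bij_betw_def)
  have "(\<integral>\<^sup>+k. ennreal (f k) \<partial>count_space UNIV) = (\<Sum>n. ennreal (f (?h n)))"
    by (rule count_int_suminf)
  also have "\<dots> = (SUP n. \<Sum>i<n. ennreal (f (?h i)))"
    by (rule suminf_eq_SUP)
  also have "\<dots> \<le> (SUP F\<in>{F. finite F \<and> F \<subseteq> UNIV}. ennreal (sum f F))"
  proof (rule SUP_least)
    fix n
    have "(\<Sum>i<n. ennreal (f (?h i))) = ennreal (sum f (?h ` {..<n}))"
      using assms(2) inj by (simp add: sum_ennreal sum.reindex inj_on_subset[OF inj])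
    also have "\<dots> \<le> (SUP F\<in>{F. finite F \<and> F \<subseteq> UNIV}. ennreal (sum f F))"
      by (intro SUP_upper) auto
    finally show "(\<Sum>i<n. ennreal (f (?h i))) \<le> \<dots>" .
  qed
  finally have le: "(\<integral>\<^sup>+k. ennreal (f k) \<partial>count_space UNIV) \<le> ennreal (infsum f UNIV)" using L by simp
  have "ennreal (infsum f UNIV) \<le> (\<integral>\<^sup>+k. ennreal (f k) \<partial>count_space UNIV)"
    unfolding L by (intro SUP_least ge) auto
  with le show ?thesis by (rule antisym[rotated])
qed



lemma geom_int_summable:
  fixes b :: real assumes "b > 0"
  shows "(\<lambda>k::int. exp (- b * \<bar>of_int k\<bar>)) summable_on UNIV"
proof -
  have sn: "(\<lambda>n::nat. exp (- b * real n)) summable_on UNIV"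
  proof (rule summable_nonneg_imp_summable_on)
    have "summable (\<lambda>n::nat. (exp (- b)) ^ n)"
      using assms by (intro summable_geometric) auto
    then show "summable (\<lambda>n::nat. exp (- b * real n))"
      by (simp add: exp_of_nat_mult[symmetric] mult.commute)
  qed auto
  have A: "(\<lambda>k::int. exp (- b * \<bar>of_int k\<bar>)) summable_on (int ` UNIV)"
    by (subst summable_on_reindex) (use sn in \<open>auto simp: o_def\<close>)
  have B: "(\<lambda>k::int. exp (- b * \<bar>of_int k\<bar>)) summable_on ((\<lambda>n. - int n) ` UNIV)"
    by (subst summable_on_reindex) (use sn in \<open>auto simp: o_def inj_on_def\<close>)
  have U: "int ` UNIV \<union> (\<lambda>n. - int n) ` UNIV = (UNIV :: int set)"
  proof -
    have "k \<in> int ` UNIV \<union> (\<lambda>n. - int n) ` UNIV" for k :: int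
    proof (cases "k \<ge> 0")
      case True then show ?thesis by (metis UNIV_I UnI1 image_eqI nonneg_int_cases)
    next
      case False then have "k = - int (nat (-k))" by simp
      then show ?thesis by blast
    qed
    then show ?thesis by blast
  qed
  show ?thesis using summable_on_union[OF A B] U by simp
qed

lemma gauss_bound:
  fixes \<sigma> P t :: real and k :: int
  assumes "\<sigma> > 0"
  shows "exp (- (t + P * of_int k)\<^sup>2 / (2 * \<sigma>\<^sup>2)) \<le> exp (t\<^sup>2 / (2 * \<sigma>\<^sup>2)) * exp (- (P\<^sup>2 / (4 * \<sigma>\<^sup>2)) * \<bar>of_int k\<bar>)"
proof -
  have k2: "\<bar>real_of_int k\<bar> \<le> (real_of_int k)\<^sup>2"
  proof (cases "k = 0")
    case False
    then have "1 \<le> \<bar>real_of_int k\<bar>" by linarith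
    then have "\<bar>real_of_int k\<bar> * 1 \<le> \<bar>real_of_int k\<bar> * \<bar>real_of_int k\<bar>" by (intro mult_left_mono) auto
    then show ?thesis by (simp add: power2_eq_square abs_mult[symmetric])
  qed simp
  have "P\<^sup>2 * \<bar>of_int k\<bar> \<le> P\<^sup>2 * (of_int k)\<^sup>2" by (intro mult_left_mono k2) auto
  also have "P\<^sup>2 * (of_int k)\<^sup>2 \<le> 2 * ((t + P * of_int k)\<^sup>2 + t\<^sup>2)"
  proof -
    have e1: "P\<^sup>2 * (of_int k)\<^sup>2 = ((t + P * of_int k) - t)\<^sup>2" by (simp add: power_mult_distrib)
    have "0 \<le> ((t + P * of_int k) + t)\<^sup>2" by simp
    then show ?thesis unfolding e1 by (simp add: power2_eq_square algebra_simps)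
  qed
  finally have key: "P\<^sup>2 * \<bar>of_int k\<bar> \<le> 2 * ((t + P * of_int k)\<^sup>2 + t\<^sup>2)" .
  have s: "\<sigma>\<^sup>2 > 0" using assms by simp
  have "- (t + P * of_int k)\<^sup>2 / (2 * \<sigma>\<^sup>2) \<le> t\<^sup>2 / (2 * \<sigma>\<^sup>2) + (- (P\<^sup>2 / (4 * \<sigma>\<^sup>2)) * \<bar>of_int k\<bar>)"
    using key s by (simp add: field_simps)
  then show ?thesis by (simp add: exp_add[symmetric])
qed

lemma gauss_summable:
  fixes \<mu> \<sigma> P y :: real
  assumes "\<sigma> > 0" "P > 0"
  shows "(\<lambda>k::int. normal_density \<mu> \<sigma> (y + P * of_int k)) summable_on UNIV"
proof -
  define t where "t = y - \<mu>"
  define b where "b = P\<^sup>2 / (4 * \<sigma>\<^sup>2)"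
  have b: "b > 0" using assms by (simp add: b_def)
  define C where "C = 1 / sqrt (2 * pi * \<sigma>\<^sup>2) * exp (t\<^sup>2 / (2 * \<sigma>\<^sup>2))"
  have "(\<lambda>k::int. C * exp (- b * \<bar>of_int k\<bar>)) summable_on UNIV"
    by (intro summable_on_cmult_right geom_int_summable b)
  then show ?thesis
  proof (rule summable_on_comparison_test)
    fix k :: int
    have e: "y + P * of_int k - \<mu> = t + P * of_int k" by (simp add: t_def)
    show "normal_density \<mu> \<sigma> (y + P * of_int k) \<le> C * exp (- b * \<bar>of_int k\<bar>)"
      unfolding normal_density_def C_def e b_def
      using gauss_bound[OF assms(1), of t P k] by (simp add: mult.assoc divide_right_mono)
  qed simp
qed



lemma interval_floor:
  fixes P a z :: real and k :: int assumes "P > 0"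
  shows "z \<in> {a + P * of_int k ..< a + P * of_int k + P} \<longleftrightarrow> k = \<lfloor>(z - a) / P\<rfloor>"
proof -
  have "z \<in> {a + P * of_int k ..< a + P * of_int k + P} \<longleftrightarrow> of_int k \<le> (z - a) / P \<and> (z - a) / P < of_int k + 1"
    using assms by (auto simp: field_simps)
  also have "\<dots> \<longleftrightarrow> k = \<lfloor>(z - a) / P\<rfloor>" by (simp add: floor_eq_iff eq_commute[of k])
  finally show ?thesis .
qed

lemma unwrap:
  fixes f :: "real \<Rightarrow> ennreal" and P a :: real
  assumes [measurable]: "f \<in> borel_measurable borel" and P: "P > 0"
  shows "(\<integral>\<^sup>+y. indicator {a..a+P} y * (\<integral>\<^sup>+k. f (y + P * of_int k) \<partial>count_space UNIV) \<partial>lborel)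
         = (\<integral>\<^sup>+y. f y \<partial>lborel)"
proof -
  have "(\<integral>\<^sup>+y. indicator {a..a+P} y * (\<integral>\<^sup>+k. f (y + P * of_int k) \<partial>count_space UNIV) \<partial>lborel)
      = (\<integral>\<^sup>+y. (\<integral>\<^sup>+k. indicator {a..a+P} y * f (y + P * of_int k) \<partial>count_space UNIV) \<partial>lborel)"
    by (subst nn_integral_cmult) auto
  also have "\<dots> = (\<integral>\<^sup>+k. (\<integral>\<^sup>+y. indicator {a..a+P} y * f (y + P * of_int k) \<partial>lborel) \<partial>count_space UNIV)"
    by (rule nn_integral_count_space_nn_integral) auto
  also have "\<dots> = (\<integral>\<^sup>+k. (\<integral>\<^sup>+z. indicator {a + P * of_int k ..< a + P * of_int k + P} z * f z \<partial>lborel) \<partial>count_space UNIV)"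
  proof (rule nn_integral_cong)
    fix k :: int
    have "(\<integral>\<^sup>+z. indicator {a + P * of_int k ..< a + P * of_int k + P} z * f z \<partial>lborel)
        = (\<integral>\<^sup>+x. indicator {a + P * of_int k ..< a + P * of_int k + P} (P * of_int k + 1 * x) * f (P * of_int k + 1 * x) \<partial>lborel)"
      using nn_integral_real_affine[of "\<lambda>z. indicator {a + P * of_int k ..< a + P * of_int k + P} z * f z" 1 "P * of_int k"] by simp
    also have "\<dots> = (\<integral>\<^sup>+x. indicator {a..<a+P} x * f (x + P * of_int k) \<partial>lborel)"
      by (auto intro!: nn_integral_cong simp: indicator_def add.commute)
    also have "\<dots> = (\<integral>\<^sup>+x. indicator {a..a+P} x * f (x + P * of_int k) \<partial>lborel)"
      by (intro nn_integral_cong_AE eventually_mono[OF AE_lborel_singleton[of "a+P"]])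
         (auto simp: indicator_def)
    finally show "(\<integral>\<^sup>+y. indicator {a..a+P} y * f (y + P * of_int k) \<partial>lborel) = (\<integral>\<^sup>+z. indicator {a + P * of_int k ..< a + P * of_int k + P} z * f z \<partial>lborel)" by (rule sym)
  qed
  also have "\<dots> = (\<integral>\<^sup>+z. (\<integral>\<^sup>+k. indicator {a + P * of_int k ..< a + P * of_int k + P} z * f z \<partial>count_space UNIV) \<partial>lborel)"
    by (rule nn_integral_count_space_nn_integral[symmetric]) auto
  also have "\<dots> = (\<integral>\<^sup>+z. f z \<partial>lborel)"
  proof (rule nn_integral_cong)
    fix z
    have "(\<integral>\<^sup>+k. indicator {a + P * of_int k ..< a + P * of_int k + P} z * f z \<partial>count_space UNIV)
        = (\<Sum>k\<in>{\<lfloor>(z - a) / P\<rfloor>}. indicator {a + P * of_int k ..< a + P * of_int k + P} z * f z)"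
      by (rule nn_integral_count_space') (auto simp: indicator_def interval_floor[OF P] simp del: atLeastLessThan_iff)
    also have "\<dots> = f z" using interval_floor[OF P, of z a "\<lfloor>(z - a) / P\<rfloor>"] by (simp add: indicator_def del: atLeastLessThan_iff)
    finally show "(\<integral>\<^sup>+k. indicator {a + P * of_int k ..< a + P * of_int k + P} z * f z \<partial>count_space UNIV) = f z" .
  qed
  finally show ?thesis .
qed

lemma count_shift:
  fixes g :: "int \<Rightarrow> ennreal" and k :: int
  shows "(\<integral>\<^sup>+j. g (j + k) \<partial>count_space UNIV) = (\<integral>\<^sup>+j. g j \<partial>count_space UNIV)"
proof -
  have "bij_betw (\<lambda>j. j + k) UNIV UNIV"
    by (rule bij_betwI[where g="\<lambda>j. j - k"]) auto
  then show ?thesis by (rule nn_integral_bij_count_space)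
qed



lemma amgm_pt:
  fixes p q t :: real assumes "p \<ge> 0" "q \<ge> 0" "t > 0"
  shows "sqrt (p * q) \<le> t / 2 * p + 1 / (2 * t) * q"
proof -
  define u where "u = sqrt (t * p)"
  define v where "v = sqrt (q / t)"
  have "sqrt (p * q) = u * v"
    using assms by (simp add: u_def v_def real_sqrt_mult[symmetric])
  moreover have "u\<^sup>2 = t * p" "v\<^sup>2 = q / t" using assms by (simp_all add: u_def v_def)
  moreover have "2 * (u * v) \<le> u\<^sup>2 + v\<^sup>2"
  proof -
    have "0 \<le> (u - v)\<^sup>2" by simp
    then show ?thesis by (simp add: power2_eq_square algebra_simps)
  qed
  moreover have "t / 2 * p = u\<^sup>2 / 2" "1 / (2 * t) * q = v\<^sup>2 / 2"
    using assms calculation by simp_all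
  ultimately show ?thesis by simp
qed

lemma amgm_inf:
  fixes x a b :: real
  assumes x: "x \<ge> 0" and a: "a \<ge> 0" and b: "b \<ge> 0"
    and H: "\<And>t. t > 0 \<Longrightarrow> x \<le> t / 2 * a + 1 / (2 * t) * b"
  shows "x \<le> sqrt (a * b)"
proof (cases "a > 0 \<and> b > 0")
  case True
  define sa where "sa = sqrt a"
  define sb where "sb = sqrt b"
  have sa: "sa > 0" "a = sa * sa" using True by (simp_all add: sa_def)
  have sb: "sb > 0" "b = sb * sb" using True by (simp_all add: sb_def)
  define t where "t = sb / sa"
  have t: "t > 0" using sa sb by (simp add: t_def)
  have "t / 2 * a + 1 / (2 * t) * b = sa * sb"
    unfolding t_def sa(2) sb(2) using sa(1) sb(1) by (simp add: field_simps)
  moreover have "sa * sb = sqrt (a * b)" by (simp add: sa_def sb_def real_sqrt_mult)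
  ultimately show ?thesis using H[OF t] by simp
next
  case False
  then have ab: "a = 0 \<or> b = 0" using a b by auto
  show ?thesis
  proof (rule ccontr)
    assume "\<not> ?thesis"
    then have xp: "x > 0" using ab by auto
    show False
    proof (cases "a = 0")
      case True
      define t where "t = (b + 1) / x"
      have t: "t > 0" using xp b by (simp add: t_def)
      have "1 / (2 * t) * b = b * x / (2 * (b + 1))"
        using xp b by (simp add: t_def)
      also have "\<dots> < x"
        using xp b by (simp add: divide_less_eq)
      finally have "1 / (2 * t) * b < x" .
      with H[OF t] True show False by simp
    next
      case False
      with ab have b0: "b = 0" by simp
      define t where "t = x / (a + 1)"
      have t: "t > 0" using xp a by (simp add: t_def)
      have "t / 2 * a = a * x / (2 * (a + 1))"
        by (simp add: t_def mult.commute)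
      also have "\<dots> < x"
        using xp a by (simp add: divide_less_eq)
      finally have "t / 2 * a < x" .
      with H[OF t] b0 show False by simp
    qed
  qed
qed

lemma cs_ennreal:
  fixes k :: "'a \<Rightarrow> ennreal" and p q :: "'a \<Rightarrow> real"
  assumes [measurable]: "k \<in> borel_measurable M" "p \<in> borel_measurable M" "q \<in> borel_measurable M"
    and pn: "\<And>x. p x \<ge> 0" and qn: "\<And>x. q x \<ge> 0"
    and A: "(\<integral>\<^sup>+x. k x * ennreal (p x) \<partial>M) = ennreal a"
    and B: "(\<integral>\<^sup>+x. k x * ennreal (q x) \<partial>M) = ennreal b"
    and a: "a \<ge> 0" and b: "b \<ge> 0"
  shows "(\<integral>\<^sup>+x. k x * ennreal (sqrt (p x * q x)) \<partial>M) \<le> ennreal (sqrt (a * b))"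
proof -
  define X where "X = (\<integral>\<^sup>+x. k x * ennreal (sqrt (p x * q x)) \<partial>M)"
  have bound: "X \<le> ennreal (t / 2 * a + 1 / (2 * t) * b)" if t: "t > 0" for t
  proof -
    have "X \<le> (\<integral>\<^sup>+x. ennreal (t / 2) * (k x * ennreal (p x)) + ennreal (1 / (2 * t)) * (k x * ennreal (q x)) \<partial>M)"
      unfolding X_def
    proof (rule nn_integral_mono)
      fix x
      have "ennreal (sqrt (p x * q x)) \<le> ennreal (t / 2 * p x + 1 / (2 * t) * q x)"
        by (intro ennreal_leI amgm_pt pn qn t)
      also have "\<dots> = ennreal (t / 2) * ennreal (p x) + ennreal (1 / (2 * t)) * ennreal (q x)"
        using t pn[of x] qn[of x] by (simp add: ennreal_mult[symmetric])
      finally have "k x * ennreal (sqrt (p x * q x)) \<le> k x * (ennreal (t / 2) * ennreal (p x) + ennreal (1 / (2 * t)) * ennreal (q x))"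
        by (rule mult_left_mono) simp
      then show "k x * ennreal (sqrt (p x * q x)) \<le> ennreal (t / 2) * (k x * ennreal (p x)) + ennreal (1 / (2 * t)) * (k x * ennreal (q x))"
        by (simp add: distrib_left mult.left_commute)
    qed
    also have "\<dots> = ennreal (t / 2) * (\<integral>\<^sup>+x. k x * ennreal (p x) \<partial>M) + ennreal (1 / (2 * t)) * (\<integral>\<^sup>+x. k x * ennreal (q x) \<partial>M)"
      by (subst nn_integral_add) (auto simp: nn_integral_cmult)
    also have "\<dots> = ennreal (t / 2 * a + 1 / (2 * t) * b)"
      using t a b by (simp add: A B ennreal_mult[symmetric])
    finally show ?thesis .
  qed
  have "X \<noteq> \<top>" using bound[of 1] by (auto simp: top_unique)
  then obtain x where x: "X = ennreal x" "x \<ge> 0" by (cases X) auto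
  have "x \<le> sqrt (a * b)"
  proof (rule amgm_inf[OF x(2) a b])
    fix t :: real assume t: "t > 0"
    have "0 \<le> t / 2 * a + 1 / (2 * t) * b" using t a b by simp
    then show "x \<le> t / 2 * a + 1 / (2 * t) * b" using bound[OF t] x by (simp add: ennreal_le_iff)
  qed
  then show ?thesis unfolding X_def[symmetric] x by (rule ennreal_leI)
qed



lemma indicator_PiE_prod:
  fixes Y :: "'b set" and y :: "'a \<Rightarrow> 'b"
  assumes "finite I"
  shows "(indicator (PiE I (\<lambda>_. Y)) y :: ennreal) = (if y \<in> extensional I then (\<Prod>j\<in>I. indicator Y (y j)) else 0)"
  using assms
  by (auto simp: indicator_def PiE_iff prod_zero_iff)

lemma sfin_lborel_prod: "product_sigma_finite (\<lambda>_::nat. lborel :: real measure)"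
  by (simp add: product_sigma_finite_def lborel.sigma_finite_measure_axioms)

lemma bit_channel_meas[measurable]:
  fixes W :: "bool \<Rightarrow> real \<Rightarrow> real"
  assumes [measurable]: "\<And>b. W b \<in> borel_measurable borel"
  shows "(\<lambda>y. bit_channel W m i y u b) \<in> borel_measurable (PiM {1..2^m} (\<lambda>_. lborel))"
  unfolding bit_channel_def by measurable

lemma bit_channel_nonneg:
  assumes "\<And>b y. W b y \<ge> 0"
  shows "bit_channel W m i y u b \<ge> 0"
  unfolding bit_channel_def using assms by (intro sum_nonneg mult_nonneg_nonneg prod_nonneg) auto



lemma degrade:
  fixes W1 W2 :: "bool \<Rightarrow> real \<Rightarrow> real" and Y1 Y2 :: "real set" and R :: "real \<Rightarrow> ennreal" and d :: real
  assumes W1n: "\<And>b y. W1 b y \<ge> 0" and W2n: "\<And>b y. W2 b y \<ge> 0"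
    and [measurable]: "\<And>b. W1 b \<in> borel_measurable borel" "\<And>b. W2 b \<in> borel_measurable borel"
      "R \<in> borel_measurable borel" "Y1 \<in> sets borel" "Y2 \<in> sets borel"
    and D1: "\<And>b y1. y1 \<in> Y1 \<Longrightarrow> (\<integral>\<^sup>+t. indicator Y2 t * R (y1 - t * d) * ennreal (W2 b t) \<partial>lborel) = ennreal (W1 b y1)"
    and D2: "\<And>y2. y2 \<in> Y2 \<Longrightarrow> (\<integral>\<^sup>+t. indicator Y1 t * R (t - y2 * d) \<partial>lborel) = 1"
  shows "bhatt_bit W2 Y2 m i \<le> bhatt_bit W1 Y1 m i"
proof -
  define I where "I = {1..2^m::nat}"
  have finI: "finite I" by (simp add: I_def)
  define M where "M = PiM I (\<lambda>_. lborel :: real measure)"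
  interpret PS: product_sigma_finite "\<lambda>_::nat. lborel :: real measure" by (rule sfin_lborel_prod)
  interpret FS: finite_product_sigma_finite "\<lambda>_::nat. lborel :: real measure" I
    by standard (simp add: finI)
  interpret PR: pair_sigma_finite M M
    by (simp add: pair_sigma_finite_def FS.sigma_finite_measure_axioms M_def)
  define K where "K y1 y2 = (\<Prod>j\<in>I. indicator Y2 (y2 j) * R (y1 j - y2 j * d))" for y1 y2 :: "nat \<Rightarrow> real"
  have Kmeas[measurable]: "(\<lambda>(y1, y2). K y1 y2) \<in> borel_measurable (M \<Otimes>\<^sub>M M)"
    unfolding K_def M_def by measurable
  have Kmeas2[measurable]: "K y1 \<in> borel_measurable (PiM I (\<lambda>_. lborel))" for y1
    unfolding K_def M_def by measurable
  have bcm[measurable]: "(\<lambda>y. bit_channel W2 m i y u b) \<in> borel_measurable (PiM I (\<lambda>_. lborel))" for u b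
    unfolding I_def by measurable
  have stepA: "(\<integral>\<^sup>+y2. K y1 y2 * ennreal (\<Prod>j\<in>I. W2 (x j) (y2 j)) \<partial>M) = ennreal (\<Prod>j\<in>I. W1 (x j) (y1 j))"
    if y1: "\<And>j. j \<in> I \<Longrightarrow> y1 j \<in> Y1" for y1 and x :: "nat \<Rightarrow> bool"
  proof -
    have "(\<integral>\<^sup>+y2. K y1 y2 * ennreal (\<Prod>j\<in>I. W2 (x j) (y2 j)) \<partial>M)
       = (\<integral>\<^sup>+y2. (\<Prod>j\<in>I. indicator Y2 (y2 j) * R (y1 j - y2 j * d) * ennreal (W2 (x j) (y2 j))) \<partial>M)"
      unfolding K_def using W2n by (simp add: prod_ennreal[symmetric] prod.distrib)
    also have "\<dots> = (\<Prod>j\<in>I. (\<integral>\<^sup>+t. indicator Y2 t * R (y1 j - t * d) * ennreal (W2 (x j) t) \<partial>lborel))"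
      unfolding M_def by (rule PS.product_nn_integral_prod) (auto simp: finI)
    also have "\<dots> = (\<Prod>j\<in>I. ennreal (W1 (x j) (y1 j)))"
      using y1 D1 by (intro prod.cong) auto
    also have "\<dots> = ennreal (\<Prod>j\<in>I. W1 (x j) (y1 j))"
      using W1n by (simp add: prod_ennreal)
    finally show ?thesis .
  qed
  have stepB: "ennreal (bit_channel W1 m i y1 u b) = (\<integral>\<^sup>+y2. K y1 y2 * ennreal (bit_channel W2 m i y2 u b) \<partial>M)"
    if y1: "\<And>j. j \<in> I \<Longrightarrow> y1 j \<in> Y1" for y1 u b
  proof -
    let ?V = "PiE {i+1..2 ^ m} (\<lambda>_. UNIV :: bool set)"
    let ?c = "1 / 2 ^ (2 ^ m - 1) :: real"
    let ?x = "\<lambda>v j. polar_encode m (join_input i u b v) j"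
    have fin: "finite ?V" by (simp add: finite_PiE)
    have pt: "ennreal (bit_channel W m i y2 u b) = (\<Sum>v\<in>?V. ennreal ?c * ennreal (\<Prod>j\<in>I. W (?x v j) (y2 j)))"
      if Wn: "\<And>b y. W b y \<ge> 0" for y2 and W :: "bool \<Rightarrow> real \<Rightarrow> real"
    proof -
      have "(\<Sum>v\<in>?V. ennreal ?c * ennreal (\<Prod>j\<in>I. W (?x v j) (y2 j))) = (\<Sum>v\<in>?V. ennreal (?c * (\<Prod>j\<in>I. W (?x v j) (y2 j))))"
        by (intro sum.cong refl ennreal_mult[symmetric]) (simp_all add: prod_nonneg Wn)
      also have "\<dots> = ennreal (\<Sum>v\<in>?V. ?c * (\<Prod>j\<in>I. W (?x v j) (y2 j)))"
        by (rule sum_ennreal) (simp add: prod_nonneg Wn)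
      finally show ?thesis unfolding bit_channel_def I_def[symmetric] by simp
    qed
    have "(\<integral>\<^sup>+y2. K y1 y2 * ennreal (bit_channel W2 m i y2 u b) \<partial>M)
        = (\<integral>\<^sup>+y2. (\<Sum>v\<in>?V. ennreal ?c * (K y1 y2 * ennreal (\<Prod>j\<in>I. W2 (?x v j) (y2 j)))) \<partial>M)"
    proof -
      show ?thesis by (simp only: pt[OF W2n] sum_distrib_left mult.left_commute)
    qed
    also have "\<dots> = (\<Sum>v\<in>?V. ennreal ?c * (\<integral>\<^sup>+y2. K y1 y2 * ennreal (\<Prod>j\<in>I. W2 (?x v j) (y2 j)) \<partial>M))"
      unfolding M_def by (subst nn_integral_sum) (auto intro!: sum.cong nn_integral_cmult)
    also have "\<dots> = (\<Sum>v\<in>?V. ennreal ?c * ennreal (\<Prod>j\<in>I. W1 (?x v j) (y1 j)))"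
      using stepA[OF y1] by simp
    also have "\<dots> = ennreal (bit_channel W1 m i y1 u b)"
      by (simp only: pt[OF W1n])
    finally show ?thesis by (rule sym)
  qed
  have stepE: "(\<integral>\<^sup>+y1. indicator (PiE I (\<lambda>_. Y1)) y1 * K y1 y2 \<partial>M) = indicator (PiE I (\<lambda>_. Y2)) y2"
    if y2: "y2 \<in> space M" for y2
  proof -
    have "(\<integral>\<^sup>+y1. indicator (PiE I (\<lambda>_. Y1)) y1 * K y1 y2 \<partial>M)
       = (\<integral>\<^sup>+y1. (\<Prod>j\<in>I. indicator Y1 (y1 j) * (indicator Y2 (y2 j) * R (y1 j - y2 j * d))) \<partial>M)"
      by (rule nn_integral_cong)
         (auto simp: M_def space_PiM indicator_PiE_prod[OF finI] K_def prod.distrib PiE_iff)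
    also have "\<dots> = (\<Prod>j\<in>I. (\<integral>\<^sup>+t. indicator Y1 t * (indicator Y2 (y2 j) * R (t - y2 j * d)) \<partial>lborel))"
      unfolding M_def by (rule PS.product_nn_integral_prod) (auto simp: finI)
    also have "\<dots> = (\<Prod>j\<in>I. indicator Y2 (y2 j))"
    proof (rule prod.cong)
      fix j assume "j \<in> I"
      show "(\<integral>\<^sup>+t. indicator Y1 t * (indicator Y2 (y2 j) * R (t - y2 j * d)) \<partial>lborel) = indicator Y2 (y2 j)"
      proof (cases "y2 j \<in> Y2")
        case True then show ?thesis using D2[OF True] by simp
      qed simp
    qed simp
    also have "\<dots> = indicator (PiE I (\<lambda>_. Y2)) y2"
      using y2 by (simp add: indicator_PiE_prod[OF finI] M_def space_PiM PiE_iff)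
    finally show ?thesis .
  qed
  define S2 where "S2 u y2 = ennreal (sqrt (bit_channel W2 m i y2 u False * bit_channel W2 m i y2 u True))" for u y2
  have S2meas[measurable]: "S2 u \<in> borel_measurable M" for u unfolding S2_def M_def I_def by measurable
  have Kmeas1: "(\<lambda>y1. K y1 y2) \<in> borel_measurable M" for y2
    unfolding K_def M_def by measurable
  have PiEsets[measurable]: "PiE I (\<lambda>_. Y1) \<in> sets M"
    unfolding M_def by (rule sets_PiM_I_finite) (auto simp: finI)
  have inner: "indicator (PiE I (\<lambda>_. Y1)) y1 * ennreal (sqrt (bit_channel W1 m i y1 u False * bit_channel W1 m i y1 u True))
        \<ge> (\<integral>\<^sup>+y2. indicator (PiE I (\<lambda>_. Y1)) y1 * K y1 y2 * S2 u y2 \<partial>M)" for y1 u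
  proof (cases "y1 \<in> PiE I (\<lambda>_. Y1)")
    case True
    then have y1: "\<And>j. j \<in> I \<Longrightarrow> y1 j \<in> Y1" by (auto simp: PiE_iff)
    have "(\<integral>\<^sup>+y2. K y1 y2 * S2 u y2 \<partial>M) \<le> ennreal (sqrt (bit_channel W1 m i y1 u False * bit_channel W1 m i y1 u True))"
      unfolding S2_def
      by (rule cs_ennreal[OF _ _ _ _ _ stepB[OF y1, symmetric] stepB[OF y1, symmetric]])
         (auto simp: bit_channel_nonneg W1n W2n M_def)
    then show ?thesis using True by simp
  qed simp
  have "bhatt_bit W1 Y1 m i \<ge> (\<Sum>u \<in> PiE {1..i-1} (\<lambda>_. UNIV).
        \<integral>\<^sup>+y1. (\<integral>\<^sup>+y2. indicator (PiE I (\<lambda>_. Y1)) y1 * K y1 y2 * S2 u y2 \<partial>M) \<partial>M)"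
    unfolding bhatt_bit_def I_def[symmetric] M_def[symmetric]
    by (intro sum_mono nn_integral_mono inner)
  also have "(\<Sum>u \<in> PiE {1..i-1} (\<lambda>_. UNIV).
        \<integral>\<^sup>+y1. (\<integral>\<^sup>+y2. indicator (PiE I (\<lambda>_. Y1)) y1 * K y1 y2 * S2 u y2 \<partial>M) \<partial>M)
      = (\<Sum>u \<in> PiE {1..i-1} (\<lambda>_. UNIV).
        \<integral>\<^sup>+y2. S2 u y2 * (\<integral>\<^sup>+y1. indicator (PiE I (\<lambda>_. Y1)) y1 * K y1 y2 \<partial>M) \<partial>M)"
  proof (rule sum.cong[OF refl])
    fix u :: "nat \<Rightarrow> bool"
    have "(\<integral>\<^sup>+y1. (\<integral>\<^sup>+y2. indicator (PiE I (\<lambda>_. Y1)) y1 * K y1 y2 * S2 u y2 \<partial>M) \<partial>M)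
        = (\<integral>\<^sup>+y2. (\<integral>\<^sup>+y1. indicator (PiE I (\<lambda>_. Y1)) y1 * K y1 y2 * S2 u y2 \<partial>M) \<partial>M)"
      by (rule PR.Fubini'[symmetric]) measurable
    also have "\<dots> = (\<integral>\<^sup>+y2. S2 u y2 * (\<integral>\<^sup>+y1. indicator (PiE I (\<lambda>_. Y1)) y1 * K y1 y2 \<partial>M) \<partial>M)"
    proof (rule nn_integral_cong)
      fix y2
      have m1: "(\<lambda>y1. indicator (PiE I (\<lambda>_. Y1)) y1 * K y1 y2) \<in> borel_measurable M"
        using Kmeas1 PiEsets by (intro borel_measurable_times_ennreal borel_measurable_indicator)
      have "(\<integral>\<^sup>+y1. indicator (PiE I (\<lambda>_. Y1)) y1 * K y1 y2 * S2 u y2 \<partial>M)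
          = (\<integral>\<^sup>+y1. S2 u y2 * (indicator (PiE I (\<lambda>_. Y1)) y1 * K y1 y2) \<partial>M)"
        by (simp add: ac_simps)
      also have "\<dots> = S2 u y2 * (\<integral>\<^sup>+y1. indicator (PiE I (\<lambda>_. Y1)) y1 * K y1 y2 \<partial>M)"
        by (rule nn_integral_cmult[OF m1])
      finally show "(\<integral>\<^sup>+y1. indicator (PiE I (\<lambda>_. Y1)) y1 * K y1 y2 * S2 u y2 \<partial>M) = \<dots>" .
    qed
    finally show "(\<integral>\<^sup>+y1. (\<integral>\<^sup>+y2. indicator (PiE I (\<lambda>_. Y1)) y1 * K y1 y2 * S2 u y2 \<partial>M) \<partial>M) = \<dots>" .
  qed
  also have "\<dots> = bhatt_bit W2 Y2 m i"
    unfolding bhatt_bit_def I_def[symmetric] M_def[symmetric]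
    by (intro sum.cong refl nn_integral_cong) (subst stepE, assumption, simp add: S2_def mult.commute)
  finally show ?thesis .
qed



lemma nd_shift: "normal_density 0 s (z - m) = normal_density m s z"
  by (simp add: normal_density_def)

lemma nd_shift2: "normal_density m s (m + u) = normal_density 0 s u"
  by (simp add: normal_density_def)

lemma sq_div_aux: "(c::real) \<noteq> 0 \<Longrightarrow> (A / c)\<^sup>2 / (2 * (s / c)\<^sup>2) = A\<^sup>2 / (2 * s\<^sup>2)"
  by (simp add: power_divide)

lemma nd_scale:
  fixes c \<sigma> \<mu> w :: real assumes "c > 0" "\<sigma> > 0"
  shows "c * normal_density \<mu> \<sigma> (c * w) = normal_density (\<mu> / c) (\<sigma> / c) w"
proof -
  have e1: "sqrt (2 * pi * (\<sigma> / c)\<^sup>2) = sqrt (2 * pi * \<sigma>\<^sup>2) / c"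
    using assms by (simp add: real_sqrt_mult real_sqrt_divide power_divide)
  have e2: "(w - \<mu> / c)\<^sup>2 / (2 * (\<sigma> / c)\<^sup>2) = (c * w - \<mu>)\<^sup>2 / (2 * \<sigma>\<^sup>2)"
  proof -
    have "w - \<mu> / c = (c * w - \<mu>) / c" using assms by (simp add: field_simps)
    then have "(w - \<mu> / c)\<^sup>2 / (2 * (\<sigma> / c)\<^sup>2) = ((c * w - \<mu>) / c)\<^sup>2 / (2 * (\<sigma> / c)\<^sup>2)" by simp
    also have "\<dots> = (c * w - \<mu>)\<^sup>2 / (2 * \<sigma>\<^sup>2)" using assms by (intro sq_div_aux) simp
    finally show ?thesis by simp
  qed
  have e3: "- (w - \<mu> / c)\<^sup>2 / (2 * (\<sigma> / c)\<^sup>2) = - (c * w - \<mu>)\<^sup>2 / (2 * \<sigma>\<^sup>2)"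
    using e2 by (metis minus_divide_left)
  show ?thesis unfolding normal_density_def e1 e3 using assms by simp
qed

lemma nn_integral_nd: "\<sigma> > 0 \<Longrightarrow> (\<integral>\<^sup>+z. ennreal (normal_density \<mu> \<sigma> z) \<partial>lborel) = 1"
  by (subst nn_integral_eq_integral) auto

lemma conv_scaled:
  fixes c \<sigma> \<tau> \<mu> v :: real
  assumes c: "c > 0" and s: "\<sigma> > 0" and t: "\<tau> > 0" and var: "\<tau>\<^sup>2 + (\<sigma> / c)\<^sup>2 = \<sigma>\<^sup>2"
  shows "(\<integral>\<^sup>+z. ennreal (normal_density 0 \<tau> (v - z / c) * normal_density \<mu> \<sigma> z) \<partial>lborel)
       = ennreal (normal_density (\<mu> / c) \<sigma> v)"
proof -
  have sc: "\<sigma> / c > 0" using c s by simp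
  have "(\<integral>\<^sup>+z. ennreal (normal_density 0 \<tau> (v - z / c) * normal_density \<mu> \<sigma> z) \<partial>lborel)
      = ennreal \<bar>c\<bar> * (\<integral>\<^sup>+w. ennreal (normal_density 0 \<tau> (v - (0 + c * w) / c) * normal_density \<mu> \<sigma> (0 + c * w)) \<partial>lborel)"
    using nn_integral_real_affine[of "\<lambda>z. ennreal (normal_density 0 \<tau> (v - z / c) * normal_density \<mu> \<sigma> z)" c 0] c
    by simp
  also have "\<dots> = (\<integral>\<^sup>+w. ennreal c * ennreal (normal_density 0 \<tau> (v - w) * normal_density \<mu> \<sigma> (c * w)) \<partial>lborel)"
    using c by (subst nn_integral_cmult) auto
  also have "\<dots> = (\<integral>\<^sup>+w. ennreal (normal_density 0 \<tau> (v - w) * normal_density (\<mu> / c) (\<sigma> / c) w) \<partial>lborel)"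
    using c s by (intro nn_integral_cong) (simp add: ennreal_mult[symmetric] nd_scale[symmetric] ac_simps)
  also have "\<dots> = (\<integral>\<^sup>+u. ennreal (normal_density 0 \<tau> (v - (\<mu> / c + 1 * u)) * normal_density (\<mu> / c) (\<sigma> / c) (\<mu> / c + 1 * u)) \<partial>lborel)"
    using nn_integral_real_affine[of "\<lambda>w. ennreal (normal_density 0 \<tau> (v - w) * normal_density (\<mu> / c) (\<sigma> / c) w)" 1 "\<mu> / c"]
    by simp
  also have "\<dots> = (\<integral>\<^sup>+u. ennreal (normal_density 0 \<tau> ((v - \<mu> / c) - u) * normal_density 0 (\<sigma> / c) u) \<partial>lborel)"
    by (intro nn_integral_cong) (simp add: nd_shift2 diff_diff_eq)
  also have "\<dots> = ennreal (normal_density 0 (sqrt (\<tau>\<^sup>2 + (\<sigma> / c)\<^sup>2)) (v - \<mu> / c))"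
    using fun_cong[OF conv_normal_density_zero_mean[OF t sc], of "v - \<mu> / c"] by simp
  also have "\<dots> = ennreal (normal_density (\<mu> / c) \<sigma> v)"
    using s by (simp add: var nd_shift)
  finally show ?thesis .
qed



lemma lattice_nonneg: "lattice_chan s2 l b y \<ge> 0"
  unfolding lattice_chan_def by (rule infsum_nonneg) simp

lemma lattice_ennreal:
  assumes "s2 > 0"
  shows "ennreal (lattice_chan s2 l b y) =
    (\<integral>\<^sup>+k. ennreal (normal_density (2 ^ (l - 1) * of_bool b) (sqrt s2) (y + 2 ^ l * of_int k)) \<partial>count_space UNIV)"
  unfolding lattice_chan_def using assms by (intro ennreal_infsum_count gauss_summable) auto

lemma lattice_meas[measurable]:
  assumes "s2 > 0"
  shows "lattice_chan s2 l b \<in> borel_measurable borel"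
proof -
  have "lattice_chan s2 l b = (\<lambda>y. enn2real (\<integral>\<^sup>+k. ennreal (normal_density (2 ^ (l - 1) * of_bool b) (sqrt s2) (y + 2 ^ l * of_int k)) \<partial>count_space UNIV))"
  proof (rule ext)
    fix y
    show "lattice_chan s2 l b y = enn2real (\<integral>\<^sup>+k. ennreal (normal_density (2 ^ (l - 1) * of_bool b) (sqrt s2) (y + 2 ^ l * of_int k)) \<partial>count_space UNIV)"
      by (metis lattice_ennreal[OF assms] enn2real_ennreal lattice_nonneg)
  qed
  also have "\<dots> \<in> borel_measurable borel" by measurable
  finally show ?thesis .
qed

lemma nd_shift3: "normal_density 0 s (t - m + q) = normal_density m s (t + q)"
proof -
  have "t - m + q = (t + q) - m" by simp
  then show ?thesis by (subst \<open>t - m + q = (t + q) - m\<close>) (rule nd_shift)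
qed

lemma lattice_degrade:
  assumes l1: "1 \<le> l1" and l12: "l1 < l2" and s2: "s2 > 0"
  shows "bhatt_bit (lattice_chan s2 l2) (lattice_out l2) m i \<le> bhatt_bit (lattice_chan s2 l1) (lattice_out l1) m i"
proof -
  define P1 where "P1 = (2::real) ^ l1"
  define h1 where "h1 = (2::real) ^ (l1 - 1)"
  define P2 where "P2 = (2::real) ^ l2"
  define h2 where "h2 = (2::real) ^ (l2 - 1)"
  define c where "c = (2::real) ^ (l2 - l1)"
  define d where "d = 1 / c"
  have P1h1: "P1 = 2 * h1" using l1 unfolding P1_def h1_def by (metis One_nat_def Suc_diff_le diff_Suc_1 power_Suc)
  have P2h2: "P2 = 2 * h2" using l1 l12 unfolding P2_def h2_def
    by (metis One_nat_def Suc_diff_le diff_Suc_1 power_Suc le_trans less_imp_le)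
  have P2c: "P2 = c * P1" unfolding P2_def c_def P1_def using l12 by (simp add: power_add[symmetric])
  have h2c: "h2 = c * h1"
  proof -
    have "l2 - 1 = (l2 - l1) + (l1 - 1)" using l1 l12 by simp
    then show ?thesis unfolding h2_def c_def h1_def by (simp add: power_add)
  qed
  have c2: "c \<ge> 2"
  proof -
    have "(2::real) ^ 1 \<le> 2 ^ (l2 - l1)" using l12 by (intro power_increasing) auto
    then show ?thesis by (simp add: c_def)
  qed
  have cpos: "c > 0" using c2 by simp
  have P1pos: "P1 > 0" by (simp add: P1_def)
  have P2pos: "P2 > 0" by (simp add: P2_def)
  have P2d: "P2 * d = P1" using P2c cpos by (simp add: d_def)
  define \<sigma> where "\<sigma> = sqrt s2"
  have \<sigma>: "\<sigma> > 0" using s2 by (simp add: \<sigma>_def)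
  define \<tau> where "\<tau> = sqrt (s2 - s2 * d\<^sup>2)"
  have d1: "d\<^sup>2 < 1"
  proof -
    have "d \<le> 1 / 2" using c2 by (simp add: d_def field_simps)
    moreover have "d > 0" using cpos by (simp add: d_def)
    ultimately have "d * d \<le> d * (1 / 2)" by (intro mult_left_mono) auto
    with \<open>d \<le> 1 / 2\<close> have "d * d < 1" by linarith
    then show ?thesis by (simp add: power2_eq_square)
  qed
  have \<tau>: "\<tau> > 0" unfolding \<tau>_def using s2 d1
    by (simp add: algebra_simps)
  have var: "\<tau>\<^sup>2 + (\<sigma> / c)\<^sup>2 = \<sigma>\<^sup>2"
  proof -
    have "s2 * d\<^sup>2 \<le> s2 * 1" using d1 s2 by (intro mult_left_mono) auto
    then have "s2 - s2 * d\<^sup>2 \<ge> 0" by simp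
    then have "\<tau>\<^sup>2 = s2 - s2 * d\<^sup>2" by (simp add: \<tau>_def)
    moreover have "(\<sigma> / c)\<^sup>2 = s2 * d\<^sup>2" using s2 by (simp add: \<sigma>_def d_def power_divide)
    moreover have "\<sigma>\<^sup>2 = s2" using s2 by (simp add: \<sigma>_def)
    ultimately show ?thesis by simp
  qed
  define R where "R z = (\<integral>\<^sup>+j. ennreal (normal_density 0 \<tau> (z + P1 * of_int j)) \<partial>count_space UNIV)" for z
  have Rmeas[measurable]: "R \<in> borel_measurable borel" unfolding R_def by measurable
  have Rper: "R (z - P1 * of_int k) = R z" for z k
  proof -
    have "R z = (\<integral>\<^sup>+j. ennreal (normal_density 0 \<tau> (z + P1 * of_int (j + (- k)))) \<partial>count_space UNIV)"
      unfolding R_def by (rule count_shift[symmetric, where g="\<lambda>j. ennreal (normal_density 0 \<tau> (z + P1 * of_int j))"])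
    also have "\<dots> = R (z - P1 * of_int k)"
      unfolding R_def by (intro nn_integral_cong) (simp add: algebra_simps)
    finally show ?thesis by simp
  qed
  have Y1: "lattice_out l1 = {- h1 .. - h1 + P1}" unfolding lattice_out_def h1_def[symmetric] P1h1 by simp
  have Y2: "lattice_out l2 = {- h2 .. - h2 + P2}" unfolding lattice_out_def h2_def[symmetric] P2h2 by simp
  show ?thesis
  proof (rule degrade[where R=R and d=d])
    show "lattice_out l1 \<in> sets borel" "lattice_out l2 \<in> sets borel" by (simp_all add: lattice_out_def)
    show "lattice_chan s2 l1 b \<in> borel_measurable borel" "lattice_chan s2 l2 b \<in> borel_measurable borel" for b
      using s2 by (simp_all add: lattice_meas)
  next
    fix y2 :: real
    have "(\<integral>\<^sup>+t. indicator (lattice_out l1) t * R (t - y2 * d) \<partial>lborel)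
        = (\<integral>\<^sup>+t. indicator {- h1 .. - h1 + P1} t *
            (\<integral>\<^sup>+j. ennreal (normal_density (y2 * d) \<tau> (t + P1 * of_int j)) \<partial>count_space UNIV) \<partial>lborel)"
      unfolding Y1 R_def
      by (intro nn_integral_cong arg_cong2[where f="(*)"] refl) (simp only: nd_shift3)
    also have "\<dots> = (\<integral>\<^sup>+t. ennreal (normal_density (y2 * d) \<tau> t) \<partial>lborel)"
      by (rule unwrap[OF _ P1pos]) simp
    also have "\<dots> = 1" using \<tau> by (rule nn_integral_nd)
    finally show "(\<integral>\<^sup>+t. indicator (lattice_out l1) t * R (t - y2 * d) \<partial>lborel) = 1" .
  next
    fix b y1
    define \<mu>2 where "\<mu>2 = h2 * of_bool b"
    define G where "G z = R (y1 - z * d) * ennreal (normal_density \<mu>2 \<sigma> z)" for z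
    have Gmeas[measurable]: "G \<in> borel_measurable borel" unfolding G_def by measurable
    have pt: "R (y1 - t * d) * ennreal (lattice_chan s2 l2 b t) = (\<integral>\<^sup>+k. G (t + P2 * of_int k) \<partial>count_space UNIV)" for t
    proof -
      have "R (y1 - t * d) * ennreal (lattice_chan s2 l2 b t)
          = R (y1 - t * d) * (\<integral>\<^sup>+k. ennreal (normal_density \<mu>2 \<sigma> (t + P2 * of_int k)) \<partial>count_space UNIV)"
        by (simp add: lattice_ennreal[OF s2] \<mu>2_def h2_def P2_def \<sigma>_def)
      also have "\<dots> = (\<integral>\<^sup>+k. R (y1 - t * d) * ennreal (normal_density \<mu>2 \<sigma> (t + P2 * of_int k)) \<partial>count_space UNIV)"
        by (rule nn_integral_cmult[symmetric]) simp
      also have "\<dots> = (\<integral>\<^sup>+k. G (t + P2 * of_int k) \<partial>count_space UNIV)"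
      proof (rule nn_integral_cong)
        fix k :: int
        have eq: "y1 - (t + P2 * of_int k) * d = (y1 - t * d) - P1 * of_int k"
          using P2d by (simp add: algebra_simps)
        show "R (y1 - t * d) * ennreal (normal_density \<mu>2 \<sigma> (t + P2 * of_int k)) = G (t + P2 * of_int k)"
          unfolding G_def eq Rper ..
      qed
      finally show ?thesis .
    qed
    have "(\<integral>\<^sup>+t. indicator (lattice_out l2) t * R (y1 - t * d) * ennreal (lattice_chan s2 l2 b t) \<partial>lborel)
        = (\<integral>\<^sup>+t. indicator {- h2 .. - h2 + P2} t * (\<integral>\<^sup>+k. G (t + P2 * of_int k) \<partial>count_space UNIV) \<partial>lborel)"
      unfolding Y2 by (intro nn_integral_cong) (simp add: pt[symmetric] mult.assoc)
    also have "\<dots> = (\<integral>\<^sup>+z. G z \<partial>lborel)"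
      by (rule unwrap[OF Gmeas P2pos])
    also have "\<dots> = (\<integral>\<^sup>+z. (\<integral>\<^sup>+j. ennreal (normal_density 0 \<tau> ((y1 + P1 * of_int j) - z / c) * normal_density \<mu>2 \<sigma> z) \<partial>count_space UNIV) \<partial>lborel)"
    proof (rule nn_integral_cong)
      fix z
      have "G z = (\<integral>\<^sup>+j. ennreal (normal_density 0 \<tau> (y1 - z * d + P1 * of_int j)) * ennreal (normal_density \<mu>2 \<sigma> z) \<partial>count_space UNIV)"
        unfolding G_def R_def by (rule nn_integral_multc[symmetric]) simp
      also have "\<dots> = (\<integral>\<^sup>+j. ennreal (normal_density 0 \<tau> ((y1 + P1 * of_int j) - z / c) * normal_density \<mu>2 \<sigma> z) \<partial>count_space UNIV)"
        by (intro nn_integral_cong) (simp add: ennreal_mult[symmetric] d_def algebra_simps)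
      finally show "G z = \<dots>" .
    qed
    also have "\<dots> = (\<integral>\<^sup>+j. (\<integral>\<^sup>+z. ennreal (normal_density 0 \<tau> ((y1 + P1 * of_int j) - z / c) * normal_density \<mu>2 \<sigma> z) \<partial>lborel) \<partial>count_space UNIV)"
      by (rule nn_integral_count_space_nn_integral) auto
    also have "\<dots> = (\<integral>\<^sup>+j. ennreal (normal_density (\<mu>2 / c) \<sigma> (y1 + P1 * of_int j)) \<partial>count_space UNIV)"
      by (intro nn_integral_cong conv_scaled cpos \<sigma> \<tau> var)
    also have "\<dots> = ennreal (lattice_chan s2 l1 b y1)"
      using cpos by (simp add: lattice_ennreal[OF s2] \<mu>2_def h2c h1_def P1_def \<sigma>_def)
    finally show "(\<integral>\<^sup>+t. indicator (lattice_out l2) t * R (y1 - t * d) * ennreal (lattice_chan s2 l2 b t) \<partial>lborel)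
        = ennreal (lattice_chan s2 l1 b y1)" .
  qed (simp_all add: lattice_nonneg)
qed


lemma polar_code_mono: "A \<subseteq> B \<Longrightarrow> polar_code m A \<subseteq> polar_code m B"
  unfolding polar_code_def by (intro image_mono PiE_mono) auto

theorem lemma1:
  fixes r m :: nat and s2 Pe :: real
  assumes "r \<ge> 2" and "m \<ge> 1" and "s2 > 0" and "0 < Pe" and "Pe < 1"
  shows "\<forall>l1 l2. 1 \<le> l1 \<and> l1 \<le> l2 \<and> l2 \<le> r - 1 \<longrightarrow>
           polar_code m (free_set (lattice_chan s2 l1) (lattice_out l1) m Pe)
             \<subseteq> polar_code m (free_set (lattice_chan s2 l2) (lattice_out l2) m Pe)"
proof (intro allI impI)
  fix l1 l2 :: nat
  assume H: "1 \<le> l1 \<and> l1 \<le> l2 \<and> l2 \<le> r - 1"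
  show "polar_code m (free_set (lattice_chan s2 l1) (lattice_out l1) m Pe)
             \<subseteq> polar_code m (free_set (lattice_chan s2 l2) (lattice_out l2) m Pe)"
  proof (cases "l1 = l2")
    case False
    with H have l: "1 \<le> l1" "l1 < l2" by auto
    show ?thesis
    proof (rule polar_code_mono, rule subsetI)
      fix i assume "i \<in> free_set (lattice_chan s2 l1) (lattice_out l1) m Pe"
      then have i: "i \<in> {1..2 ^ m}" "bhatt_bit (lattice_chan s2 l1) (lattice_out l1) m i < ennreal Pe"
        by (auto simp: free_set_def)
      have "bhatt_bit (lattice_chan s2 l2) (lattice_out l2) m i < ennreal Pe"
        using lattice_degrade[OF l \<open>s2 > 0\<close>, of m i] i(2) by (rule le_less_trans)
      with i(1) show "i \<in> free_set (lattice_chan s2 l2) (lattice_out l2) m Pe"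
        by (simp add: free_set_def)
    qed
  qed simp
qed

end
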